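(* Assume that we estimate the Shapley effects with the random-permutation $W$-aggregation procedure, where each $\widehat W_u(m)$ is computed with cost $\kappa N_{|u|}$ as $\widehat W_u(m)=\frac1{N_{|u|}}\sum_{n=1}^{N_{|u|}}\widehat W_u^{(n)}(m)$ with i.i.d. $(\widehat W_u^{(n)}(m))_n$ and with all $(\widehat W_u(m))_{u,m}$ independent, and that the variances $(\mathrm{Var}(\widehat W_u^{(1)}(1)))_{\emptyset\subsetneq u\subsetneq[1:p]}$ are all equal. Then the solution of $$\min_{(N_k)_{k\in[1:p-1]}\in(0,+\infty)^{p-1}}\mathrm{E}\Big[\sum_{i=1}^p\mathrm{Var}\big(\widehat\eta_i\,\big|\,(\sigma_m)_{m\in[1:M]}\big)\Big]\quad\text{subject to}\quad\kappa M\sum_{k=1}^{p-1}N_k=\kappa MN_O(p-1)$$ is $N_k^{**}=N_O$ for all $k\in[1:p-1]$.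
   Context: Setting: $\mathbf{X}=(X_1,\dots,X_p)$, $Y=f(\mathbf{X})$, $f\in L^2(\mathbb{P}_\mathbf{X})$; $W_u$ is $V_u=\mathrm{Var}(\mathrm{E}(Y|\mathbf{X}_u))$ or $E_u=\mathrm{E}(\mathrm{Var}(Y|\mathbf{X}_{-u}))$, with $W_\emptyset=0$, $W_{[1:p]}=\mathrm{Var}(Y)$ known. For a permutation $\sigma$ of $[1:p]$ and $i\in[1:p]$, $P_i(\sigma)=\{\sigma(j):j\in[1:\sigma^{-1}(i)-1]\}$. Random-permutation $W$-aggregation procedure: draw $\sigma_1,\dots,\sigma_M$ i.i.d. uniform permutations; for each $m$ and each $u$ of the form $P_{\sigma_m(j)}(\sigma_m)\cup\{\sigma_m(j)\}$ compute one estimate $\widehat W_u(m)$ (used both for the increment of $\sigma_m(j)$ and as the "previous" term for $\sigma_m(j+1)$); then $\widehat\eta_i=\frac{1}{M\mathrm{Var}(Y)}\sum_{m=1}^M(\widehat W_{P_i(\sigma_m)\cup\{i\}}(m)-\widehat W_{P_i(\sigma_m)}(m))$. The accuracy $N_u$ of $\widehat W_u(m)$ is required to depend only on $|u|$, written $N_{|u|}$, and the total cost $\kappa M\sum_{k=1}^{p-1}N_k$ is set to $\kappa MN_O(p-1)$ for a fixed $N_O\in\mathbb{N}^*$. *)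

theory Defs
  imports "HOL-Probability.Probability" "HOL-Combinatorics.Permutations"
begin

definition pred_set :: "(nat \<Rightarrow> nat) \<Rightarrow> nat \<Rightarrow> nat set" where
  "pred_set \<sigma> i = \<sigma> ` {1..< inv \<sigma> i}"

text \<open>Variance of the estimate hat W_u(m) = (1/N_|u|) sum of N_|u| i.i.d. copies of variance v:
  it is v / N_|u| for proper nonempty u, and 0 for u = {} and u = [1:p] (known values).\<close>
definition var_W :: "nat \<Rightarrow> real \<Rightarrow> (nat \<Rightarrow> real) \<Rightarrow> nat set \<Rightarrow> real" where
  "var_W p v N u = (if u = {} \<or> u = {1..p} then 0 else v / N (card u))"

text \<open>Var(hat eta_i | (sigma_m)_m): given the permutations, hat eta_i is
  (1/(M Var Y)) sum_m (hat W_{P u {i}}(m) - hat W_P(m)), all estimates independent.\<close>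
definition cond_var_eta ::
  "nat \<Rightarrow> nat \<Rightarrow> real \<Rightarrow> real \<Rightarrow> (nat \<Rightarrow> real) \<Rightarrow> (nat \<Rightarrow> nat \<Rightarrow> nat) \<Rightarrow> nat \<Rightarrow> real" where
  "cond_var_eta p M VarY v N \<sigma>s i =
     (1 / (real M * VarY))\<^sup>2 *
     (\<Sum>m\<in>{1..M}. var_W p v N (pred_set (\<sigma>s m) i \<union> {i}) + var_W p v N (pred_set (\<sigma>s m) i))"

definition perm_tuples :: "nat \<Rightarrow> nat \<Rightarrow> (nat \<Rightarrow> nat \<Rightarrow> nat) set" where
  "perm_tuples p M = {1..M} \<rightarrow>\<^sub>E {\<sigma>. \<sigma> permutes {1..p}}"

definition shapley_objective :: "nat \<Rightarrow> nat \<Rightarrow> real \<Rightarrow> real \<Rightarrow> (nat \<Rightarrow> real) \<Rightarrow> real" where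
  "shapley_objective p M VarY v N =
     measure_pmf.expectation (pmf_of_set (perm_tuples p M))
       (\<lambda>\<sigma>s. \<Sum>i\<in>{1..p}. cond_var_eta p M VarY v N \<sigma>s i)"

definition feasible_alloc :: "nat \<Rightarrow> nat \<Rightarrow> real \<Rightarrow> nat \<Rightarrow> (nat \<Rightarrow> real) \<Rightarrow> bool" where
  "feasible_alloc p M \<kappa> N\<^sub>O N \<longleftrightarrow>
     (\<forall>k\<in>{1..p-1}. N k > 0) \<and>
     \<kappa> * real M * (\<Sum>k\<in>{1..p-1}. N k) = \<kappa> * real M * real N\<^sub>O * real (p - 1)"

end

theory Submission
  imports Defs
begin

definition hfun :: "nat \<Rightarrow> real \<Rightarrow> (nat \<Rightarrow> real) \<Rightarrow> nat \<Rightarrow> real" where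
  "hfun p v N k = (if k = 0 \<or> k = p then 0 else v / N k)"

lemma var_W_card:
  assumes "S \<subseteq> {1..p}"
  shows "var_W p v N S = hfun p v N (card S)"
proof -
  have fin: "finite S" using assms finite_subset by blast
  have e1: "S = {} \<longleftrightarrow> card S = 0" using fin by simp
  have e2: "S = {1..p} \<longleftrightarrow> card S = p"
    using assms card_subset_eq[of "{1..p}" S] by auto
  show ?thesis unfolding var_W_def hfun_def using e1 e2 by simp
qed

lemma sum_h1: "(\<Sum>j\<in>{1..p}. hfun p v N j) = (\<Sum>k\<in>{1..p-1}. v / N k)"
proof (cases p)
  case 0 then show ?thesis by (simp add: hfun_def)
next
  case (Suc q)
  have "{1..p} = insert p {1..p-1}" using Suc by auto
  then have "(\<Sum>j\<in>{1..p}. hfun p v N j) = hfun p v N p + (\<Sum>j\<in>{1..p-1}. hfun p v N j)"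
    using Suc by simp
  also have "(\<Sum>j\<in>{1..p-1}. hfun p v N j) = (\<Sum>k\<in>{1..p-1}. v / N k)"
    by (rule sum.cong) (auto simp: hfun_def)
  finally show ?thesis by (simp add: hfun_def)
qed

lemma sum_h2: "(\<Sum>j\<in>{1..p}. hfun p v N (j - 1)) = (\<Sum>k\<in>{1..p-1}. v / N k)"
proof (cases p)
  case 0 then show ?thesis by (simp add: hfun_def)
next
  case (Suc q)
  have "(\<Sum>j\<in>{1..p}. hfun p v N (j - 1)) = (\<Sum>k\<in>{0..q}. hfun p v N k)"
    using Suc sum.shift_bounds_cl_Suc_ivl[of "\<lambda>j. hfun p v N (j - 1)" 0 q] by simp
  also have "\<dots> = hfun p v N 0 + (\<Sum>k\<in>{1..q}. hfun p v N k)"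
    by (simp add: sum.atLeast_Suc_atMost)
  also have "(\<Sum>k\<in>{1..q}. hfun p v N k) = (\<Sum>k\<in>{1..p-1}. v / N k)"
    using Suc by (intro sum.cong) (auto simp: hfun_def)
  finally show ?thesis by (simp add: hfun_def)
qed

lemma perm_sum:
  assumes "\<sigma> permutes {1..p}"
  shows "(\<Sum>i\<in>{1..p}. var_W p v N (pred_set \<sigma> i \<union> {i}) + var_W p v N (pred_set \<sigma> i))
         = 2 * (\<Sum>k\<in>{1..p-1}. v / N k)"
proof -
  have bij: "bij_betw \<sigma> {1..p} {1..p}" using assms permutes_imp_bij by blast
  have inj: "inj \<sigma>" using assms permutes_inj by blast
  have "(\<Sum>i\<in>{1..p}. var_W p v N (pred_set \<sigma> i \<union> {i}) + var_W p v N (pred_set \<sigma> i))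
      = (\<Sum>j\<in>{1..p}. var_W p v N (pred_set \<sigma> (\<sigma> j) \<union> {\<sigma> j}) + var_W p v N (pred_set \<sigma> (\<sigma> j)))"
    using sum.reindex_bij_betw[OF bij, symmetric] by simp
  also have "\<dots> = (\<Sum>j\<in>{1..p}. hfun p v N j + hfun p v N (j - 1))"
  proof (rule sum.cong)
    fix j assume j: "j \<in> {1..p}"
    have iv: "inv \<sigma> (\<sigma> j) = j" using inj by (simp add: inv_f_f)
    have P: "pred_set \<sigma> (\<sigma> j) = \<sigma> ` {1..<j}" unfolding pred_set_def iv ..
    have "{1..j} = insert j {1..<j}" using j by auto
    then have Q: "\<sigma> ` {1..<j} \<union> {\<sigma> j} = \<sigma> ` {1..j}" by auto
    have sub1: "\<sigma> ` {1..j} \<subseteq> {1..p}" using j bij bij_betw_imp_surj_on by fastforce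
    have sub2: "\<sigma> ` {1..<j} \<subseteq> {1..p}" using j bij bij_betw_imp_surj_on by fastforce
    have c1: "card (\<sigma> ` {1..j}) = j" using inj card_image[of \<sigma>] inj_on_subset by (metis card_atLeastAtMost diff_Suc_1 subset_UNIV)
    have c2: "card (\<sigma> ` {1..<j}) = j - 1" using inj card_image[of \<sigma>] inj_on_subset by (metis card_atLeastLessThan subset_UNIV)
    show "var_W p v N (pred_set \<sigma> (\<sigma> j) \<union> {\<sigma> j}) + var_W p v N (pred_set \<sigma> (\<sigma> j))
        = hfun p v N j + hfun p v N (j - 1)"
      unfolding P Q using var_W_card[OF sub1] var_W_card[OF sub2] c1 c2 by simp
  qed simp
  also have "\<dots> = 2 * (\<Sum>k\<in>{1..p-1}. v / N k)"
    using sum_h1[of p v N] sum_h2[of p v N] by (simp add: sum.distrib)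
  finally show ?thesis .
qed

lemma objective_eq:
  assumes "M \<ge> 1"
  shows "shapley_objective p M VarY v N = (1 / (real M * VarY))\<^sup>2 * real M * (2 * (\<Sum>k\<in>{1..p-1}. v / N k))"
proof -
  let ?S = "perm_tuples p M"
  have fin: "finite ?S" unfolding perm_tuples_def
    by (intro finite_PiE) (auto intro: finite_permutations)
  have ne: "?S \<noteq> {}"
  proof -
    have "(\<lambda>m\<in>{1..M}. id) \<in> ?S" unfolding perm_tuples_def
      using permutes_id[of "{1..p}"] by auto
    then show ?thesis by blast
  qed
  let ?c = "(1 / (real M * VarY))\<^sup>2 * real M * (2 * (\<Sum>k\<in>{1..p-1}. v / N k))"
  have "\<And>s. s \<in> ?S \<Longrightarrow> (\<Sum>i\<in>{1..p}. cond_var_eta p M VarY v N s i) = ?c"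
  proof -
    fix s assume s: "s \<in> ?S"
    have "(\<Sum>i\<in>{1..p}. cond_var_eta p M VarY v N s i)
       = (1 / (real M * VarY))\<^sup>2 * (\<Sum>m\<in>{1..M}. \<Sum>i\<in>{1..p}. var_W p v N (pred_set (s m) i \<union> {i}) + var_W p v N (pred_set (s m) i))"
      unfolding cond_var_eta_def by (simp add: sum_distrib_left) (rule sum.swap)
    also have "\<dots> = (1 / (real M * VarY))\<^sup>2 * (\<Sum>m\<in>{1..M}. 2 * (\<Sum>k\<in>{1..p-1}. v / N k))"
    proof -
      have "\<And>m. m \<in> {1..M} \<Longrightarrow> s m permutes {1..p}" using s unfolding perm_tuples_def by auto
      then show ?thesis using perm_sum by (intro arg_cong[where f="\<lambda>x. _ * x"] sum.cong) auto
    qed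
    also have "\<dots> = ?c" by simp
    finally show "(\<Sum>i\<in>{1..p}. cond_var_eta p M VarY v N s i) = ?c" .
  qed
  then have "sum (\<lambda>s. \<Sum>i\<in>{1..p}. cond_var_eta p M VarY v N s i) ?S = real (card ?S) * ?c"
    by simp
  then show ?thesis unfolding shapley_objective_def
    using integral_pmf_of_set[OF ne fin] fin ne by simp
qed

lemma tangent: fixes x a :: real assumes "x > 0" "a > 0" shows "1 / x \<ge> 2 / a - x / a\<^sup>2"
  and "1 / x = 2 / a - x / a\<^sup>2 \<Longrightarrow> x = a"
proof -
  have e: "1 / x - (2 / a - x / a\<^sup>2) = (x - a)\<^sup>2 / (a\<^sup>2 * x)"
    using assms by (simp add: field_simps power2_eq_square)
  have "(x - a)\<^sup>2 / (a\<^sup>2 * x) \<ge> 0" using assms by simp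
  then show "1 / x \<ge> 2 / a - x / a\<^sup>2" using e by linarith
  assume "1 / x = 2 / a - x / a\<^sup>2"
  then have "(x - a)\<^sup>2 / (a\<^sup>2 * x) = 0" using e by simp
  then show "x = a" using assms by simp
qed

theorem proposition5:
  fixes p M N\<^sub>O :: nat and \<kappa> VarY v :: real
  assumes "p \<ge> 1" and "M \<ge> 1" and "N\<^sub>O \<ge> 1" and "\<kappa> > 0" and "VarY > 0" and "v > 0"
  shows "feasible_alloc p M \<kappa> N\<^sub>O (\<lambda>k. real N\<^sub>O) \<and>
         (\<forall>N. feasible_alloc p M \<kappa> N\<^sub>O N \<longrightarrow>
              shapley_objective p M VarY v (\<lambda>k. real N\<^sub>O) \<le> shapley_objective p M VarY v N \<and>
              (shapley_objective p M VarY v N = shapley_objective p M VarY v (\<lambda>k. real N\<^sub>O)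
                 \<longrightarrow> (\<forall>k\<in>{1..p-1}. N k = real N\<^sub>O)))"
proof (intro conjI allI impI)
  show "feasible_alloc p M \<kappa> N\<^sub>O (\<lambda>k. real N\<^sub>O)"
    unfolding feasible_alloc_def using assms by simp
next
  fix N assume F: "feasible_alloc p M \<kappa> N\<^sub>O N"
  let ?a = "real N\<^sub>O"
  have pos: "\<forall>k\<in>{1..p-1}. N k > 0" using F unfolding feasible_alloc_def by blast
  have "\<kappa> * real M \<noteq> 0" using assms by simp
  then have sumN: "(\<Sum>k\<in>{1..p-1}. N k) = ?a * real (p - 1)"
    using F unfolding feasible_alloc_def by (simp add: mult.assoc)
  have apos: "?a > 0" using assms by simp
  have C: "(1 / (real M * VarY))\<^sup>2 * real M * 2 * v > 0" using assms by simp
  define D where "D = (\<Sum>k\<in>{1..p-1}. 1 / N k) - (\<Sum>k\<in>{1..p-1}. 1 / ?a)"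
  have lb: "(\<Sum>k\<in>{1..p-1}. 2 / ?a - N k / ?a\<^sup>2) \<le> (\<Sum>k\<in>{1..p-1}. 1 / N k)"
    using tangent(1) pos apos by (intro sum_mono) auto
  have lbv: "(\<Sum>k\<in>{1..p-1}. 2 / ?a - N k / ?a\<^sup>2) = (\<Sum>k\<in>{1..p-1}. 1 / ?a)"
  proof -
    have "(\<Sum>k\<in>{1..p-1}. 2 / ?a - N k / ?a\<^sup>2) = real (p-1) * (2 / ?a) - (\<Sum>k\<in>{1..p-1}. N k) / ?a\<^sup>2"
      by (simp add: sum_subtractf sum_divide_distrib[symmetric])
    also have "\<dots> = real (p-1) * (2 / ?a) - ?a * real (p - 1) / ?a\<^sup>2" by (simp only: sumN)
    also have "\<dots> = real (p-1) * (1 / ?a)" using apos by (simp add: field_simps power2_eq_square)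
    finally show ?thesis by simp
  qed
  have D0: "D \<ge> 0" using lb lbv D_def by simp
  have obj: "\<And>N'. shapley_objective p M VarY v N' = (1 / (real M * VarY))\<^sup>2 * real M * 2 * v * (\<Sum>k\<in>{1..p-1}. 1 / N' k)"
    using objective_eq[OF assms(2)] by (simp add: sum_distrib_left mult.assoc)
  show "shapley_objective p M VarY v (\<lambda>k. ?a) \<le> shapley_objective p M VarY v N"
    unfolding obj using D0 C D_def by (intro mult_left_mono) auto
  assume "shapley_objective p M VarY v N = shapley_objective p M VarY v (\<lambda>k. ?a)"
  then have "(1 / (real M * VarY))\<^sup>2 * real M * 2 * v * (\<Sum>k\<in>{1..p-1}. 1 / N k) = (1 / (real M * VarY))\<^sup>2 * real M * 2 * v * (\<Sum>k\<in>{1..p-1}. 1 / ?a)"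
    unfolding obj by (simp only:)
  then have "(\<Sum>k\<in>{1..p-1}. 1 / N k) = (\<Sum>k\<in>{1..p-1}. 1 / ?a)"
    using C by (simp only: mult_left_cancel less_irrefl)
  then have eqs: "(\<Sum>k\<in>{1..p-1}. 1 / N k - (2 / ?a - N k / ?a\<^sup>2)) = 0"
    using lbv by (simp add: sum_subtractf)
  have "\<forall>k\<in>{1..p-1}. 1 / N k - (2 / ?a - N k / ?a\<^sup>2) = 0"
    using sum_nonneg_eq_0_iff[THEN iffD1, OF _ _ eqs] tangent(1) pos apos by auto
  then show "\<forall>k\<in>{1..p-1}. N k = ?a"
    using tangent(2) pos apos by auto
qed

end
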